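(* Let $a,b$ be positive integers and $c$ an integer with $-b<c<a$, and suppose that $E_{(-b,c,a)}^{(\infty,\infty,\infty)}=\bigoplus_{r\in\mathbb{Z}}A_r$ is of full support. Then for every monomial $w\in A_r$ there exist infinitely many monomials in $A_r$ with pairwise disjoint supports whose length equals the length of $w$.
   Context: $E$ is the Grassmann algebra of an infinite-dimensional vector space with basis $e_1,e_2,\dots$; monomials are $1$ and $e_{i_1}\cdots e_{i_k}$ with $i_1<\dots<i_k$, of length $k$ and support $\{e_{i_1},\dots,e_{i_k}\}$. For pairwise distinct integers $r_1,r_2,r_3$, $E_{(r_1,r_2,r_3)}^{(\infty,\infty,\infty)}=\bigoplus_rA_r$ is the $\mathbb{Z}$-grading obtained by splitting $\{e_i\}$ into three disjoint infinite sets, giving elements of the $j$-th set degree $r_j$ and monomials the sum of the degrees of their factors ($A_r$ is spanned by the monomials of degree $r$). Full support means $A_r\ne0$ for every $r\in\mathbb{Z}$. *)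

theory Defs
  imports Main
begin

text \<open>Generators e_i are indexed by natural numbers; a monomial e_{i1}...e_{ik}
  (i1 < ... < ik) is identified with its support, a finite set of indices
  (the empty set being the monomial 1). Its length is the cardinality.
  A grading of the type E_{(r1,r2,r3)}^{(inf,inf,inf)} is given by a degree
  function deg on generators taking exactly the values r1, r2, r3, each on an
  infinite set of generators.\<close>

definition three_inf_grading :: "(nat \<Rightarrow> int) \<Rightarrow> int \<Rightarrow> int \<Rightarrow> int \<Rightarrow> bool" where
  "three_inf_grading deg r1 r2 r3 \<longleftrightarrow>
     (\<forall>i. deg i \<in> {r1, r2, r3}) \<and>
     infinite {i. deg i = r1} \<and> infinite {i. deg i = r2} \<and> infinite {i. deg i = r3}"

definition mon_deg :: "(nat \<Rightarrow> int) \<Rightarrow> nat set \<Rightarrow> int" where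
  "mon_deg deg S = (\<Sum>i\<in>S. deg i)"

definition homog_monomials :: "(nat \<Rightarrow> int) \<Rightarrow> int \<Rightarrow> nat set set" where
  "homog_monomials deg r = {S. finite S \<and> mon_deg deg S = r}"

definition full_support :: "(nat \<Rightarrow> int) \<Rightarrow> bool" where
  "full_support deg \<longleftrightarrow> (\<forall>r::int. homog_monomials deg r \<noteq> {})"

end

theory Submission
  imports Defs
begin

lemma avoid_lemma:
  assumes "finite w" "\<forall>i\<in>w. infinite {j. deg j = deg i}" "finite B"
  shows "\<exists>T. finite T \<and> T \<inter> B = {} \<and> card T = card w \<and> mon_deg deg T = mon_deg deg w"
  using assms
proof (induction w arbitrary: B rule: finite_induct)
  case empty
  have "finite {} \<and> {} \<inter> B = {} \<and> card {} = card {} \<and> mon_deg deg {} = mon_deg deg {}"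
    by simp
  then show ?case by blast
next
  case (insert x w)
  have h1: "\<forall>i\<in>w. infinite {j. deg j = deg i}" using insert.prems(1) by blast
  have "\<exists>T. finite T \<and> T \<inter> B = {} \<and> card T = card w \<and> mon_deg deg T = mon_deg deg w"
    by (rule insert.IH[OF h1 insert.prems(2)])
  then obtain T where T: "finite T" "T \<inter> B = {}" "card T = card w" "mon_deg deg T = mon_deg deg w"
    by blast
  have "infinite {j. deg j = deg x}" using insert.prems(1) by blast
  moreover have "finite (B \<union> T)" using T(1) insert.prems(2) by blast
  ultimately have "infinite ({j. deg j = deg x} - (B \<union> T))"
    by (rule Diff_infinite_finite[rotated])
  then have "{j. deg j = deg x} - (B \<union> T) \<noteq> {}" by (metis finite.emptyI)
  then obtain j where j: "deg j = deg x" "j \<notin> B" "j \<notin> T" by blast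
  have c: "card (insert j T) = card (insert x w)"
    using T(1,3) j(3) insert.hyps by simp
  have d: "mon_deg deg (insert j T) = mon_deg deg (insert x w)"
    using T(1,4) j(1,3) insert.hyps unfolding mon_deg_def by simp
  show ?case
    using T j c d by blast
qed

theorem lemma4p6:
  fixes a b c r :: int and deg :: "nat \<Rightarrow> int" and w :: "nat set"
  assumes "a > 0" and "b > 0" and "-b < c" and "c < a"
    and "three_inf_grading deg (-b) c a"
    and "full_support deg"
    and "w \<in> homog_monomials deg r" and "w \<noteq> {}"
  shows "\<exists>F. F \<subseteq> homog_monomials deg r \<and> infinite F \<and>
             (\<forall>T\<in>F. card T = card w) \<and>
             (\<forall>T1\<in>F. \<forall>T2\<in>F. T1 \<noteq> T2 \<longrightarrow> T1 \<inter> T2 = {})"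
proof -
  have fw: "finite w" and dw: "mon_deg deg w = r" using assms(7) by (auto simp: homog_monomials_def)
  have inf: "\<forall>i\<in>w. infinite {j. deg j = deg i}"
  proof
    fix i assume "i \<in> w"
    have "deg i \<in> {-b, c, a}" using assms(5) by (auto simp: three_inf_grading_def)
    then consider "deg i = -b" | "deg i = c" | "deg i = a" by blast
    then show "infinite {j. deg j = deg i}" using assms(5) unfolding three_inf_grading_def
      by cases simp_all
  qed
  define P where "P N T \<longleftrightarrow> finite T \<and> T \<inter> {..N} = {} \<and> card T = card w \<and> mon_deg deg T = r" for N T
  have exP: "\<exists>T. P N T" for N
  proof -
    obtain T where "finite T \<and> T \<inter> {..N} = {} \<and> card T = card w \<and> mon_deg deg T = mon_deg deg w"
      using avoid_lemma[OF fw inf, of "{..N}"] by blast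
    then have "P N T" unfolding P_def using dw by simp
    then show ?thesis by blast
  qed
  define f where "f N = (SOME T. P N T)" for N
  have fP: "P N (f N)" for N unfolding f_def by (rule someI_ex[OF exP])
  define g where "g = rec_nat (f 0) (\<lambda>k G. f (Max G))"
  have g0: "g 0 = f 0" and gS: "g (Suc k) = f (Max (g k))" for k by (simp_all add: g_def)
  have gP: "\<exists>N. P N (g k)" for k
  proof (cases k)
    case 0 then show ?thesis using fP[of 0] g0 by metis
  next
    case (Suc m) then show ?thesis using fP[of "Max (g m)"] gS[of m] by metis
  qed
  have gfin: "finite (g k)" and gcard: "card (g k) = card w"
    and gdeg: "mon_deg deg (g k) = r" for k
    using gP[of k] unfolding P_def by blast+
  have gne: "g k \<noteq> {}" for k
  proof
    assume "g k = {}"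
    then have "card w = 0" using gcard[of k] by simp
    then show False using fw assms(8) by simp
  qed
  have gt: "\<forall>x\<in>g (Suc k). x > Max (g k)" for k
  proof
    fix x assume "x \<in> g (Suc k)"
    moreover have "g (Suc k) \<inter> {..Max (g k)} = {}"
      using fP[of "Max (g k)"] unfolding gS P_def by blast
    ultimately show "x > Max (g k)" by (simp add: disjoint_iff not_le)
  qed
  have sep: "k < l \<Longrightarrow> \<forall>x\<in>g l. x > Max (g k)" for k l
  proof (induction l)
    case 0 then show ?case by simp
  next
    case (Suc l)
    show ?case
    proof (cases "k = l")
      case True then show ?thesis using gt by simp
    next
      case False
      then have "k < l" using Suc by simp
      have "Max (g l) \<in> g l" using gfin gne by (rule Max_in)
      then have "Max (g k) < Max (g l)" using Suc.IH \<open>k < l\<close> by blast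
      then show ?thesis using gt[of l] by (meson less_trans)
    qed
  qed
  have lt: "g k \<inter> g l = {}" if "k < l" for k l
  proof -
    { fix x assume x: "x \<in> g k" "x \<in> g l"
      have "x \<le> Max (g k)" using gfin x(1) by (rule Max_ge)
      moreover have "x > Max (g k)" using sep[OF that] x(2) by blast
      ultimately have False by simp }
    then show ?thesis by blast
  qed
  have disj: "g k \<inter> g l = {}" if "k \<noteq> l" for k l
  proof (cases "k < l")
    case True then show ?thesis by (rule lt)
  next
    case False then have "l < k" using that by simp
    then show ?thesis using lt[of l k] by blast
  qed
  have "inj g"
  proof (rule injI)
    fix k l assume "g k = g l"
    show "k = l"
    proof (rule ccontr)
      assume "k \<noteq> l"
      then have "g k \<inter> g l = {}" by (rule disj)
      then show False using \<open>g k = g l\<close> gne[of k] by simp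
    qed
  qed
  have "infinite (range g)" using \<open>inj g\<close> by (metis finite_imageD infinite_UNIV_nat)
  show ?thesis
  proof (rule exI[of _ "range g"], intro conjI ballI impI)
    show "range g \<subseteq> homog_monomials deg r"
      using gfin gdeg unfolding homog_monomials_def by blast
    show "infinite (range g)" by fact
    fix T assume "T \<in> range g"
    then obtain k where "T = g k" by blast
    then show "card T = card w" using gcard[of k] by simp
  next
    fix T1 T2 assume "T1 \<in> range g" "T2 \<in> range g" "T1 \<noteq> T2"
    then obtain k l where "T1 = g k" "T2 = g l" by blast
    then show "T1 \<inter> T2 = {}" using disj[of k l] \<open>T1 \<noteq> T2\<close> by auto
  qed
qed

end
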